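(* For every $\phi\in\mathcal{L}$ and every segment $\mathfrak{s}$ of the canonical model $\mathfrak{M}^{C}$: (1) $\mathfrak{M}^{C},\mathfrak{s}\Vdash^+\phi$ iff $\phi\in\mathbf{h}(\mathfrak{s})$; (2) $\mathfrak{M}^{C},\mathfrak{s}\Vdash^-\phi$ iff ${\sim}\phi\in\mathbf{h}(\mathfrak{s})$.
   Context: Fix a countable set $\mathsf{Prop}$ of propositional variables. The language $\mathcal{L}$ is given by the grammar $\phi::=p\mid{\sim}\phi\mid(\phi\wedge\phi)\mid(\phi\vee\phi)\mid(\phi\to\phi)\mid\Box\phi\mid\Diamond\phi$ with $p\in\mathsf{Prop}$. $\phi\leftrightarrow\chi$ abbreviates $(\phi\to\chi)\wedge(\chi\to\phi)$. Semantics. A structure $\langle W,\le,R^+_\Box,R^-_\Box,R^+_\Diamond,R^-_\Diamond,v^+,v^-\rangle$ with $W\ne\varnothing$, $\le$ a preorder, four arbitrary binary relations, and $v^+,v^-:\mathsf{Prop}\to2^W$ upward closed under $\le$ is a $\mathsf{CN4K}$ model; $R(w)=\{w'\mid wRw'\}$. Support: $w\Vdash^\pm p$ iff $w\in v^\pm(p)$; $w\Vdash^+{\sim}\phi$ iff $w\Vdash^-\phi$; $w\Vdash^-{\sim}\phi$ iff $w\Vdash^+\phi$; $w\Vdash^+\phi\wedge\chi$ iff both; $w\Vdash^-\phi\wedge\chi$ iff $w\Vdash^-\phi$ or $w\Vdash^-\chi$; $w\Vdash^+\phi\vee\chi$ iff $w\Vdash^+\phi$ or $w\Vdash^+\chi$;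 $w\Vdash^-\phi\vee\chi$ iff both negatively supported; $w\Vdash^+\phi\to\chi$ iff for all $w'\ge w$, $w'\Vdash^+\phi$ implies $w'\Vdash^+\chi$; $w\Vdash^-\phi\to\chi$ iff $w\Vdash^+\phi$ and $w\Vdash^-\chi$; $w\Vdash^+\Box\phi$ iff $\forall w'\ge w\ \forall w''\in R^+_\Box(w')$: $w''\Vdash^+\phi$; $w\Vdash^-\Box\phi$ iff $\forall w'\ge w\ \exists w''\in R^-_\Box(w')$: $w''\Vdash^-\phi$; $w\Vdash^+\Diamond\phi$ iff $\forall w'\ge w\ \exists w''\in R^+_\Diamond(w')$: $w''\Vdash^+\phi$; $w\Vdash^-\Diamond\phi$ iff $\forall w'\ge w\ \forall w''\in R^-_\Diamond(w')$: $w''\Vdash^-\phi$. Calculus. $\mathcal{H}\mathsf{N4}$ has as axioms all $\mathcal{L}$-instances of: $\phi\to(\chi\to\phi)$; $(\phi\to(\chi\to\psi))\to((\phi\to\chi)\to(\phi\to\psi))$; $\phi\wedge\chi\to\phi$; $\phi\wedge\chi\to\chi$; $\phi\to(\chi\to\phi\wedge\chi)$; $\phi\to\phi\vee\chi$; $\chi\to\phi\vee\chi$; $(\phi\to\psi)\to((\chi\to\psi)\to(\phi\vee\chi\to\psi))$; ${\sim}{\sim}\phi\leftrightarrow\phi$; ${\sim}(\phi\wedge\chi)\leftrightarrow({\sim}\phi\vee{\sim}\chi)$; ${\sim}(\phi\vee\chi)\leftrightarrow({\sim}\phi\wedge{\sim}\chi)$; ${\sim}(\phi\to\chi)\leftrightarrow(\phi\wedge{\sim}\chi)$;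 and modus ponens. $\mathcal{H}\mathsf{CN4K}$ adds the axiom schemes $\Box(\phi\to\phi)$; ${\sim}\Diamond{\sim}(\phi\to\phi)$; $(\Box\phi\wedge\Box\chi)\to\Box(\phi\wedge\chi)$; $({\sim}\Diamond\phi\wedge{\sim}\Diamond\chi)\to{\sim}\Diamond(\phi\vee\chi)$, and the rules: from $\vdash\phi\to\chi$ infer $\vdash\Box\phi\to\Box\chi$; from $\vdash\phi\to\chi$ infer $\vdash\Diamond\phi\to\Diamond\chi$; from $\vdash{\sim}\phi\to{\sim}\chi$ infer $\vdash{\sim}\Box\phi\to{\sim}\Box\chi$; from $\vdash{\sim}\phi\to{\sim}\chi$ infer $\vdash{\sim}\Diamond\phi\to{\sim}\Diamond\chi$. $\Gamma\vdash_{\mathcal{H}\mathsf{CN4K}}\phi$ means there is a finite sequence ending in $\phi$ of axiom instances, members of $\Gamma$, and rule consequences of earlier members, the modal rules being applied only to theorems. A set $\Xi\subseteq\mathcal{L}$ is saturated if it is deductively closed under $\vdash_{\mathcal{H}\mathsf{CN4K}}$ and prime ($\xi\vee\xi'\in\Xi$ implies $\xi\in\Xi$ or $\xi'\in\Xi$). A segment is a tuple $\mathfrak{s}=\langle\Xi,\Phi^+_\Box,\Phi^-_\Box,\Phi^+_\Diamond,\Phi^-_\Diamond\rangle$ where $\Xi$ is a saturated set (the head, $\mathbf{h}(\mathfrak{s})=\Xi$) and each $\Phi^\bullet_\heartsuit$ is a set (possibly empty) of saturated sets such that: if $\Box\phi\in\Xi$ then $\phi\in\Delta$ for every $\Delta\in\Phi^+_\Box$;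 if ${\sim}\Box\phi\in\Xi$ then ${\sim}\phi\in\Delta$ for some $\Delta\in\Phi^-_\Box$; if $\Diamond\phi\in\Xi$ then $\phi\in\Delta$ for some $\Delta\in\Phi^+_\Diamond$; if ${\sim}\Diamond\phi\in\Xi$ then ${\sim}\phi\in\Delta$ for every $\Delta\in\Phi^-_\Diamond$. The canonical model $\mathfrak{M}^{C}$ has as states all segments, $\mathfrak{s}\le^{C}\mathfrak{s}'$ iff $\mathbf{h}(\mathfrak{s})\subseteq\mathbf{h}(\mathfrak{s}')$, $\mathfrak{s}\,{R^\bullet_\heartsuit}^{C}\,\mathfrak{s}'$ iff $\mathbf{h}(\mathfrak{s}')\in\Phi^\bullet_\heartsuit$ (where $\Phi^\bullet_\heartsuit$ is the corresponding component of $\mathfrak{s}$), for $\bullet\in\{+,-\}$, $\heartsuit\in\{\Box,\Diamond\}$; $\mathfrak{s}\in {v^+}^{C}(p)$ iff $p\in\mathbf{h}(\mathfrak{s})$, and $\mathfrak{s}\in{v^-}^{C}(p)$ iff ${\sim}p\in\mathbf{h}(\mathfrak{s})$. *)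

theory Defs
  imports Main "HOL-Library.Countable"
begin

datatype 'a fm =
    Atom 'a
  | Neg "'a fm"
  | Conj "'a fm" "'a fm"
  | Disj "'a fm" "'a fm"
  | Imp "'a fm" "'a fm"
  | Box "'a fm"
  | Dia "'a fm"

definition Iff :: "'a fm \<Rightarrow> 'a fm \<Rightarrow> 'a fm" where
  "Iff \<phi> \<chi> = Conj (Imp \<phi> \<chi>) (Imp \<chi> \<phi>)"

inductive Ax :: "'a fm \<Rightarrow> bool" where
  A1: "Ax (Imp \<phi> (Imp \<chi> \<phi>))"
| A2: "Ax (Imp (Imp \<phi> (Imp \<chi> \<psi>)) (Imp (Imp \<phi> \<chi>) (Imp \<phi> \<psi>)))"
| A3: "Ax (Imp (Conj \<phi> \<chi>) \<phi>)"
| A4: "Ax (Imp (Conj \<phi> \<chi>) \<chi>)"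
| A5: "Ax (Imp \<phi> (Imp \<chi> (Conj \<phi> \<chi>)))"
| A6: "Ax (Imp \<phi> (Disj \<phi> \<chi>))"
| A7: "Ax (Imp \<chi> (Disj \<phi> \<chi>))"
| A8: "Ax (Imp (Imp \<phi> \<psi>) (Imp (Imp \<chi> \<psi>) (Imp (Disj \<phi> \<chi>) \<psi>)))"
| A9: "Ax (Iff (Neg (Neg \<phi>)) \<phi>)"
| A10: "Ax (Iff (Neg (Conj \<phi> \<chi>)) (Disj (Neg \<phi>) (Neg \<chi>)))"
| A11: "Ax (Iff (Neg (Disj \<phi> \<chi>)) (Conj (Neg \<phi>) (Neg \<chi>)))"
| A12: "Ax (Iff (Neg (Imp \<phi> \<chi>)) (Conj \<phi> (Neg \<chi>)))"
| K1: "Ax (Box (Imp \<phi> \<phi>))"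
| K2: "Ax (Neg (Dia (Neg (Imp \<phi> \<phi>))))"
| K3: "Ax (Imp (Conj (Box \<phi>) (Box \<chi>)) (Box (Conj \<phi> \<chi>)))"
| K4: "Ax (Imp (Conj (Neg (Dia \<phi>)) (Neg (Dia \<chi>))) (Neg (Dia (Disj \<phi> \<chi>))))"

text \<open>Derivability from premises; the modal rules apply only to theorems
  (formulas derivable from the empty set).\<close>
inductive derives :: "'a fm set \<Rightarrow> 'a fm \<Rightarrow> bool" where
  ax: "Ax \<phi> \<Longrightarrow> derives \<Gamma> \<phi>"
| hyp: "\<phi> \<in> \<Gamma> \<Longrightarrow> derives \<Gamma> \<phi>"
| mp: "derives \<Gamma> (Imp \<phi> \<chi>) \<Longrightarrow> derives \<Gamma> \<phi> \<Longrightarrow> derives \<Gamma> \<chi>"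
| RBoxP: "derives {} (Imp \<phi> \<chi>) \<Longrightarrow> derives \<Gamma> (Imp (Box \<phi>) (Box \<chi>))"
| RDiaP: "derives {} (Imp \<phi> \<chi>) \<Longrightarrow> derives \<Gamma> (Imp (Dia \<phi>) (Dia \<chi>))"
| RBoxN: "derives {} (Imp (Neg \<phi>) (Neg \<chi>)) \<Longrightarrow> derives \<Gamma> (Imp (Neg (Box \<phi>)) (Neg (Box \<chi>)))"
| RDiaN: "derives {} (Imp (Neg \<phi>) (Neg \<chi>)) \<Longrightarrow> derives \<Gamma> (Imp (Neg (Dia \<phi>)) (Neg (Dia \<chi>)))"

record ('w, 'a) cmodel =
  W :: "'w set"
  le :: "'w \<Rightarrow> 'w \<Rightarrow> bool"
  RBp :: "'w \<Rightarrow> 'w \<Rightarrow> bool"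
  RBm :: "'w \<Rightarrow> 'w \<Rightarrow> bool"
  RDp :: "'w \<Rightarrow> 'w \<Rightarrow> bool"
  RDm :: "'w \<Rightarrow> 'w \<Rightarrow> bool"
  vp :: "'a \<Rightarrow> 'w set"
  vm :: "'a \<Rightarrow> 'w set"

definition CN4K_model :: "('w, 'a) cmodel \<Rightarrow> bool" where
  "CN4K_model M \<longleftrightarrow> W M \<noteq> {}
     \<and> (\<forall>w\<in>W M. le M w w)
     \<and> (\<forall>u\<in>W M. \<forall>v\<in>W M. \<forall>w\<in>W M. le M u v \<and> le M v w \<longrightarrow> le M u w)
     \<and> (\<forall>p. vp M p \<subseteq> W M \<and> vm M p \<subseteq> W M)
     \<and> (\<forall>p. \<forall>u\<in>W M. \<forall>v\<in>W M. le M u v \<and> u \<in> vp M p \<longrightarrow> v \<in> vp M p)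
     \<and> (\<forall>p. \<forall>u\<in>W M. \<forall>v\<in>W M. le M u v \<and> u \<in> vm M p \<longrightarrow> v \<in> vm M p)"

text \<open>forces M True w \<phi> is positive support, forces M False w \<phi> negative support.
  All quantifiers range over the state set W M.\<close>
fun forces :: "('w, 'a) cmodel \<Rightarrow> bool \<Rightarrow> 'w \<Rightarrow> 'a fm \<Rightarrow> bool" where
  "forces M True w (Atom p) = (w \<in> vp M p)"
| "forces M False w (Atom p) = (w \<in> vm M p)"
| "forces M True w (Neg \<phi>) = forces M False w \<phi>"
| "forces M False w (Neg \<phi>) = forces M True w \<phi>"
| "forces M True w (Conj \<phi> \<chi>) = (forces M True w \<phi> \<and> forces M True w \<chi>)"
| "forces M False w (Conj \<phi> \<chi>) = (forces M False w \<phi> \<or> forces M False w \<chi>)"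
| "forces M True w (Disj \<phi> \<chi>) = (forces M True w \<phi> \<or> forces M True w \<chi>)"
| "forces M False w (Disj \<phi> \<chi>) = (forces M False w \<phi> \<and> forces M False w \<chi>)"
| "forces M True w (Imp \<phi> \<chi>) =
     (\<forall>w'\<in>W M. le M w w' \<longrightarrow> forces M True w' \<phi> \<longrightarrow> forces M True w' \<chi>)"
| "forces M False w (Imp \<phi> \<chi>) = (forces M True w \<phi> \<and> forces M False w \<chi>)"
| "forces M True w (Box \<phi>) =
     (\<forall>w'\<in>W M. le M w w' \<longrightarrow> (\<forall>w''\<in>W M. RBp M w' w'' \<longrightarrow> forces M True w'' \<phi>))"
| "forces M False w (Box \<phi>) =
     (\<forall>w'\<in>W M. le M w w' \<longrightarrow> (\<exists>w''\<in>W M. RBm M w' w'' \<and> forces M False w'' \<phi>))"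
| "forces M True w (Dia \<phi>) =
     (\<forall>w'\<in>W M. le M w w' \<longrightarrow> (\<exists>w''\<in>W M. RDp M w' w'' \<and> forces M True w'' \<phi>))"
| "forces M False w (Dia \<phi>) =
     (\<forall>w'\<in>W M. le M w w' \<longrightarrow> (\<forall>w''\<in>W M. RDm M w' w'' \<longrightarrow> forces M False w'' \<phi>))"

definition saturated :: "'a fm set \<Rightarrow> bool" where
  "saturated \<Xi> \<longleftrightarrow> (\<forall>\<phi>. derives \<Xi> \<phi> \<longrightarrow> \<phi> \<in> \<Xi>)
     \<and> (\<forall>\<xi> \<xi>'. Disj \<xi> \<xi>' \<in> \<Xi> \<longrightarrow> \<xi> \<in> \<Xi> \<or> \<xi>' \<in> \<Xi>)"

record 'a segment =
  hd_set :: "'a fm set"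
  PhiBp :: "'a fm set set"
  PhiBm :: "'a fm set set"
  PhiDp :: "'a fm set set"
  PhiDm :: "'a fm set set"

definition is_segment :: "'a segment \<Rightarrow> bool" where
  "is_segment s \<longleftrightarrow> saturated (hd_set s)
     \<and> (\<forall>\<Delta>\<in>PhiBp s. saturated \<Delta>) \<and> (\<forall>\<Delta>\<in>PhiBm s. saturated \<Delta>)
     \<and> (\<forall>\<Delta>\<in>PhiDp s. saturated \<Delta>) \<and> (\<forall>\<Delta>\<in>PhiDm s. saturated \<Delta>)
     \<and> (\<forall>\<phi>. Box \<phi> \<in> hd_set s \<longrightarrow> (\<forall>\<Delta>\<in>PhiBp s. \<phi> \<in> \<Delta>))
     \<and> (\<forall>\<phi>. Neg (Box \<phi>) \<in> hd_set s \<longrightarrow> (\<exists>\<Delta>\<in>PhiBm s. Neg \<phi> \<in> \<Delta>))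
     \<and> (\<forall>\<phi>. Dia \<phi> \<in> hd_set s \<longrightarrow> (\<exists>\<Delta>\<in>PhiDp s. \<phi> \<in> \<Delta>))
     \<and> (\<forall>\<phi>. Neg (Dia \<phi>) \<in> hd_set s \<longrightarrow> (\<forall>\<Delta>\<in>PhiDm s. Neg \<phi> \<in> \<Delta>))"

definition canonical :: "('a segment, 'a) cmodel" where
  "canonical = \<lparr> W = {s. is_segment s},
     le = (\<lambda>s s'. hd_set s \<subseteq> hd_set s'),
     RBp = (\<lambda>s s'. hd_set s' \<in> PhiBp s),
     RBm = (\<lambda>s s'. hd_set s' \<in> PhiBm s),
     RDp = (\<lambda>s s'. hd_set s' \<in> PhiDp s),
     RDm = (\<lambda>s s'. hd_set s' \<in> PhiDm s),
     vp = (\<lambda>p. {s. is_segment s \<and> Atom p \<in> hd_set s}),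
     vm = (\<lambda>p. {s. is_segment s \<and> Neg (Atom p) \<in> hd_set s}) \<rparr>"

end

theory Submission
  imports Defs
begin

lemma der_mono: "derives \<Gamma> \<phi> \<Longrightarrow> \<Gamma> \<subseteq> \<Gamma>' \<Longrightarrow> derives \<Gamma>' \<phi>"
proof (induction arbitrary: \<Gamma>' rule: derives.induct)
  case (ax \<phi> \<Gamma>) then show ?case by (simp add: derives.ax)
next
  case (hyp \<phi> \<Gamma>) then show ?case by (auto intro: derives.hyp)
next
  case (mp \<Gamma> \<phi> \<chi>) then show ?case using derives.mp by blast
next
  case (RBoxP \<phi> \<chi> \<Gamma>) show ?case using RBoxP.hyps by (rule derives.RBoxP)
next
  case (RDiaP \<phi> \<chi> \<Gamma>) show ?case using RDiaP.hyps by (rule derives.RDiaP)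
next
  case (RBoxN \<phi> \<chi> \<Gamma>) show ?case using RBoxN.hyps by (rule derives.RBoxN)
next
  case (RDiaN \<phi> \<chi> \<Gamma>) show ?case using RDiaN.hyps by (rule derives.RDiaN)
qed

lemma der_thm: "derives {} \<phi> \<Longrightarrow> derives \<Gamma> \<phi>"
  using der_mono by blast

lemma der_ax: "Ax \<phi> \<Longrightarrow> derives \<Gamma> \<phi>" by (rule derives.ax)

lemma imp_refl: "derives \<Gamma> (Imp a a)"
proof -
  have 1: "derives \<Gamma> (Imp (Imp a (Imp (Imp a a) a)) (Imp (Imp a (Imp a a)) (Imp a a)))"
    by (rule der_ax, rule A2)
  have 2: "derives \<Gamma> (Imp a (Imp (Imp a a) a))" by (rule der_ax, rule A1)
  have 3: "derives \<Gamma> (Imp a (Imp a a))" by (rule der_ax, rule A1)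
  show ?thesis by (rule derives.mp[OF derives.mp[OF 1 2] 3])
qed

lemma weakenI: "derives \<Gamma> b \<Longrightarrow> derives \<Gamma> (Imp a b)"
  by (rule derives.mp[OF der_ax[OF A1]])

lemma ded0: "derives \<Gamma>' b \<Longrightarrow> \<Gamma>' = insert a \<Gamma> \<Longrightarrow> derives \<Gamma> (Imp a b)"
proof (induction rule: derives.induct)
  case (ax \<phi> \<Gamma>') then show ?case by (intro weakenI derives.ax)
next
  case (hyp \<phi> \<Gamma>') then show ?case
    by (cases "\<phi> = a") (auto intro: imp_refl weakenI derives.hyp)
next
  case (mp \<Gamma>' \<phi> \<chi>)
  have 1: "derives \<Gamma> (Imp (Imp a (Imp \<phi> \<chi>)) (Imp (Imp a \<phi>) (Imp a \<chi>)))"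
    by (rule der_ax, rule A2)
  show ?case using mp derives.mp[OF derives.mp[OF 1]] by blast
next
  case (RBoxP \<phi> \<chi> G) show ?case by (rule weakenI) (rule derives.RBoxP[OF RBoxP.hyps])
next
  case (RDiaP \<phi> \<chi> G) show ?case by (rule weakenI) (rule derives.RDiaP[OF RDiaP.hyps])
next
  case (RBoxN \<phi> \<chi> G) show ?case by (rule weakenI) (rule derives.RBoxN[OF RBoxN.hyps])
next
  case (RDiaN \<phi> \<chi> G) show ?case by (rule weakenI) (rule derives.RDiaN[OF RDiaN.hyps])
qed

lemma ded: "derives (insert a \<Gamma>) b \<Longrightarrow> derives \<Gamma> (Imp a b)"
  using ded0 by blast

lemma der_hyp1: "derives (insert a \<Gamma>) a" by (rule derives.hyp) simp

lemma unded: "derives \<Gamma> (Imp a b) \<Longrightarrow> derives (insert a \<Gamma>) b"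
  by (rule derives.mp[OF der_mono der_hyp1]) auto

lemma conjD1: "derives \<Gamma> (Conj a b) \<Longrightarrow> derives \<Gamma> a"
  by (rule derives.mp[OF der_ax[OF A3]])
lemma conjD2: "derives \<Gamma> (Conj a b) \<Longrightarrow> derives \<Gamma> b"
  by (rule derives.mp[OF der_ax[OF A4]])
lemma conjI': "derives \<Gamma> a \<Longrightarrow> derives \<Gamma> b \<Longrightarrow> derives \<Gamma> (Conj a b)"
  by (rule derives.mp[OF derives.mp[OF der_ax[OF A5]]])
lemma disjI1': "derives \<Gamma> a \<Longrightarrow> derives \<Gamma> (Disj a b)"
  by (rule derives.mp[OF der_ax[OF A6]])
lemma disjI2': "derives \<Gamma> b \<Longrightarrow> derives \<Gamma> (Disj a b)"
  by (rule derives.mp[OF der_ax[OF A7]])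
lemma iffD1': "Ax (Iff a b) \<Longrightarrow> derives \<Gamma> a \<Longrightarrow> derives \<Gamma> b"
  unfolding Iff_def by (rule derives.mp[OF conjD1[OF der_ax]])
lemma iffD2': "Ax (Iff a b) \<Longrightarrow> derives \<Gamma> b \<Longrightarrow> derives \<Gamma> a"
  unfolding Iff_def by (rule derives.mp[OF conjD2[OF der_ax]])


lemma compact: "derives \<Gamma> \<phi> \<Longrightarrow> \<exists>F. finite F \<and> F \<subseteq> \<Gamma> \<and> derives F \<phi>"
proof (induction rule: derives.induct)
  case (ax \<phi> \<Gamma>) then show ?case by (auto intro: derives.ax)
next
  case (hyp \<phi> \<Gamma>) then show ?case by (intro exI[of _ "{\<phi>}"]) (auto intro: derives.hyp)
next
  case (mp \<Gamma> \<phi> \<chi>)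
  then obtain F1 F2 where "finite F1" "F1 \<subseteq> \<Gamma>" "derives F1 (Imp \<phi> \<chi>)"
    "finite F2" "F2 \<subseteq> \<Gamma>" "derives F2 \<phi>" by blast
  then show ?case
  proof (intro exI[of _ "F1 \<union> F2"] conjI)
    show "derives (F1 \<union> F2) \<chi>"
      by (rule derives.mp[OF der_mono[OF \<open>derives F1 (Imp \<phi> \<chi>)\<close>] der_mono[OF \<open>derives F2 \<phi>\<close>]]) auto
  qed auto
next
  case (RBoxP \<phi> \<chi> \<Gamma>) show ?case using RBoxP.hyps by (intro exI[of _ "{}"]) (simp add: derives.RBoxP)
next
  case (RDiaP \<phi> \<chi> \<Gamma>) show ?case using RDiaP.hyps by (intro exI[of _ "{}"]) (simp add: derives.RDiaP)
next
  case (RBoxN \<phi> \<chi> \<Gamma>) show ?case using RBoxN.hyps by (intro exI[of _ "{}"]) (simp add: derives.RBoxN)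
next
  case (RDiaN \<phi> \<chi> \<Gamma>) show ?case using RDiaN.hyps by (intro exI[of _ "{}"]) (simp add: derives.RDiaN)
qed

lemma sat_closed: "saturated \<Xi> \<Longrightarrow> derives \<Xi> a \<Longrightarrow> a \<in> \<Xi>"
  unfolding saturated_def by blast
lemma sat_prime: "saturated \<Xi> \<Longrightarrow> Disj a b \<in> \<Xi> \<Longrightarrow> a \<in> \<Xi> \<or> b \<in> \<Xi>"
  unfolding saturated_def by blast
lemma sat_der: "saturated \<Xi> \<Longrightarrow> a \<in> \<Xi> \<longleftrightarrow> derives \<Xi> a"
  unfolding saturated_def by (blast intro: derives.hyp)

lemma sat_UNIV: "saturated UNIV"
  unfolding saturated_def by blast

lemma lindenbaum:
  assumes "\<not> derives \<Delta> \<chi>"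
  shows "\<exists>\<Gamma>. \<Delta> \<subseteq> \<Gamma> \<and> saturated \<Gamma> \<and> \<chi> \<notin> \<Gamma>"
proof -
  let ?A = "{\<Gamma>. \<Delta> \<subseteq> \<Gamma> \<and> \<not> derives \<Gamma> \<chi>}"
  have ne: "?A \<noteq> {}" using assms by blast
  have ch: "\<Union>C \<in> ?A" if CC: "C \<noteq> {}" "subset.chain ?A C" for C
  proof -
    have "\<Delta> \<subseteq> \<Union>C" using that unfolding subset.chain_def by blast
    moreover have "\<not> derives (\<Union>C) \<chi>"
    proof
      assume "derives (\<Union>C) \<chi>"
      then obtain F where F: "finite F" "F \<subseteq> \<Union>C" "derives F \<chi>" using compact by blast
      obtain B where B: "B \<in> C" "F \<subseteq> B" using finite_subset_Union_chain[OF F(1,2) CC] by blast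
      have "derives B \<chi>" by (rule der_mono[OF F(3) B(2)])
      moreover have "B \<in> ?A" using B(1) CC(2) unfolding subset.chain_def by blast
      ultimately show False by simp
    qed
    ultimately show ?thesis by blast
  qed
  from subset_Zorn_nonempty[OF ne ch] obtain M where M: "M \<in> ?A" and max0: "\<forall>X\<in>?A. M \<subseteq> X \<longrightarrow> X = M"
    by (rule bexE)
  have max: "X = M" if "X \<in> ?A" "M \<subseteq> X" for X using max0 that by simp
  have ins: "derives M (Imp a \<chi>)" if "a \<notin> M" for a
  proof -
    have "insert a M \<noteq> M" using that by blast
    then have "insert a M \<notin> ?A" using max[of "insert a M"] by blast
    then have "derives (insert a M) \<chi>" using M by auto
    then show ?thesis by (rule ded)
  qed
  have "saturated M"
    unfolding saturated_def
  proof (intro conjI allI impI)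
    fix \<phi> assume "derives M \<phi>"
    show "\<phi> \<in> M"
    proof (rule ccontr)
      assume "\<phi> \<notin> M"
      then have "derives M \<chi>" by (rule derives.mp[OF ins \<open>derives M \<phi>\<close>])
      then show False using M by simp
    qed
  next
    fix a b assume d: "Disj a b \<in> M"
    show "a \<in> M \<or> b \<in> M"
    proof (rule ccontr)
      assume "\<not> (a \<in> M \<or> b \<in> M)"
      then have 1: "derives M (Imp a \<chi>)" "derives M (Imp b \<chi>)" using ins by auto
      have h: "derives M (Imp (Imp a \<chi>) (Imp (Imp b \<chi>) (Imp (Disj a b) \<chi>)))" by (rule der_ax, rule A8)
      have "derives M \<chi>" by (rule derives.mp[OF derives.mp[OF derives.mp[OF h 1(1)] 1(2)] derives.hyp[OF d]])
      then show False using M by blast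
    qed
  qed
  moreover have "\<chi> \<notin> M"
  proof
    assume "\<chi> \<in> M"
    then have "derives M \<chi>" by (rule derives.hyp)
    then show False using M by simp
  qed
  ultimately show ?thesis using M by blast
qed


lemma sat_thm: "saturated \<Xi> \<Longrightarrow> derives {} a \<Longrightarrow> a \<in> \<Xi>"
  using sat_closed der_thm by blast

lemma sat_mp: "saturated \<Xi> \<Longrightarrow> Imp a b \<in> \<Xi> \<Longrightarrow> a \<in> \<Xi> \<Longrightarrow> b \<in> \<Xi>"
  by (rule sat_closed, assumption, rule derives.mp[OF derives.hyp derives.hyp])

lemma sat_iff: "saturated \<Xi> \<Longrightarrow> Ax (Iff a b) \<Longrightarrow> (a \<in> \<Xi> \<longleftrightarrow> b \<in> \<Xi>)"
  by (meson derives.hyp iffD1' iffD2' sat_closed)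

lemma sat_conj: "saturated \<Xi> \<Longrightarrow> (Conj a b \<in> \<Xi> \<longleftrightarrow> a \<in> \<Xi> \<and> b \<in> \<Xi>)"
  by (meson conjD1 conjD2 conjI' derives.hyp sat_closed)

lemma sat_disj: "saturated \<Xi> \<Longrightarrow> (Disj a b \<in> \<Xi> \<longleftrightarrow> a \<in> \<Xi> \<or> b \<in> \<Xi>)"
  by (meson disjI1' disjI2' derives.hyp sat_closed sat_prime)

lemma sat_negneg: "saturated \<Xi> \<Longrightarrow> (Neg (Neg a) \<in> \<Xi> \<longleftrightarrow> a \<in> \<Xi>)"
  using sat_iff[OF _ A9] by blast
lemma sat_negconj: "saturated \<Xi> \<Longrightarrow> (Neg (Conj a b) \<in> \<Xi> \<longleftrightarrow> Neg a \<in> \<Xi> \<or> Neg b \<in> \<Xi>)"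
  using sat_iff[OF _ A10] sat_disj by blast
lemma sat_negdisj: "saturated \<Xi> \<Longrightarrow> (Neg (Disj a b) \<in> \<Xi> \<longleftrightarrow> Neg a \<in> \<Xi> \<and> Neg b \<in> \<Xi>)"
  using sat_iff[OF _ A11] sat_conj by blast
lemma sat_negimp: "saturated \<Xi> \<Longrightarrow> (Neg (Imp a b) \<in> \<Xi> \<longleftrightarrow> a \<in> \<Xi> \<and> Neg b \<in> \<Xi>)"
  using sat_iff[OF _ A12] sat_conj by blast

lemma conj_mp_thm: "derives {} (Imp (Conj (Imp a b) a) b)"
  by (rule ded, rule derives.mp[OF conjD1[OF der_hyp1] conjD2[OF der_hyp1]])

lemma box_lemma:
  assumes sat: "saturated \<Xi>"
  shows "finite F \<Longrightarrow> F \<subseteq> {\<psi>. Box \<psi> \<in> \<Xi>} \<Longrightarrow> derives F \<chi> \<Longrightarrow> Box \<chi> \<in> \<Xi>"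
proof (induction F arbitrary: \<chi> rule: finite_induct)
  case empty
  have "derives {} (Imp (Imp \<chi> \<chi>) \<chi>)" using empty by (intro weakenI)
  then have "derives \<Xi> (Imp (Box (Imp \<chi> \<chi>)) (Box \<chi>))" by (rule derives.RBoxP)
  then have "Imp (Box (Imp \<chi> \<chi>)) (Box \<chi>) \<in> \<Xi>" by (rule sat_closed[OF sat])
  moreover have "Box (Imp \<chi> \<chi>) \<in> \<Xi>" by (rule sat_closed[OF sat], rule der_ax, rule K1)
  ultimately show ?case by (rule sat_mp[OF sat])
next
  case (insert \<psi> F)
  have "derives F (Imp \<psi> \<chi>)" using insert(5) by (rule ded)
  then have 1: "Box (Imp \<psi> \<chi>) \<in> \<Xi>" using insert by blast
  have 2: "Box \<psi> \<in> \<Xi>" using insert(4) by blast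
  have "Imp (Conj (Box (Imp \<psi> \<chi>)) (Box \<psi>)) (Box (Conj (Imp \<psi> \<chi>) \<psi>)) \<in> \<Xi>"
    by (rule sat_closed[OF sat], rule der_ax, rule K3)
  then have 3: "Box (Conj (Imp \<psi> \<chi>) \<psi>) \<in> \<Xi>" using 1 2 sat_conj[OF sat] sat_mp[OF sat] by blast
  have "derives \<Xi> (Imp (Box (Conj (Imp \<psi> \<chi>) \<psi>)) (Box \<chi>))" by (rule derives.RBoxP[OF conj_mp_thm])
  then show ?case using 3 sat_closed[OF sat] sat_mp[OF sat] by blast
qed

lemma dia_lemma:
  assumes sat: "saturated \<Xi>"
  shows "finite F \<Longrightarrow> F \<subseteq> {Neg \<psi> | \<psi>. Neg (Dia \<psi>) \<in> \<Xi>} \<Longrightarrow> derives F \<theta> \<Longrightarrow> Neg (Dia (Neg \<theta>)) \<in> \<Xi>"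
proof (induction F arbitrary: \<theta> rule: finite_induct)
  case empty
  have "derives {} (Neg (Neg \<theta>))" using empty by (intro iffD2'[OF A9])
  then have "derives {} (Imp (Neg (Neg (Imp \<theta> \<theta>))) (Neg (Neg \<theta>)))" by (intro weakenI)
  then have "derives \<Xi> (Imp (Neg (Dia (Neg (Imp \<theta> \<theta>)))) (Neg (Dia (Neg \<theta>))))" by (rule derives.RDiaN)
  then have "Imp (Neg (Dia (Neg (Imp \<theta> \<theta>)))) (Neg (Dia (Neg \<theta>))) \<in> \<Xi>" by (rule sat_closed[OF sat])
  moreover have "Neg (Dia (Neg (Imp \<theta> \<theta>))) \<in> \<Xi>" by (rule sat_closed[OF sat], rule der_ax, rule K2)
  ultimately show ?case by (rule sat_mp[OF sat])
next
  case (insert x F)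
  obtain \<psi> where x: "x = Neg \<psi>" and 2: "Neg (Dia \<psi>) \<in> \<Xi>" using insert(4) by blast
  have "derives F (Imp (Neg \<psi>) \<theta>)" using insert(5) x by (intro ded) simp
  then have 1: "Neg (Dia (Neg (Imp (Neg \<psi>) \<theta>))) \<in> \<Xi>" using insert by blast
  let ?X = "Neg (Imp (Neg \<psi>) \<theta>)"
  have "Imp (Conj (Neg (Dia ?X)) (Neg (Dia \<psi>))) (Neg (Dia (Disj ?X \<psi>))) \<in> \<Xi>"
    by (rule sat_closed[OF sat], rule der_ax, rule K4)
  then have 3: "Neg (Dia (Disj ?X \<psi>)) \<in> \<Xi>" using 1 2 sat_conj[OF sat] sat_mp[OF sat] by blast
  have "derives {} (Imp (Neg (Disj ?X \<psi>)) (Neg (Neg \<theta>)))"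
  proof (rule ded)
    let ?G = "{Neg (Disj ?X \<psi>)}"
    have c: "derives ?G (Conj (Neg ?X) (Neg \<psi>))" by (rule iffD1'[OF A11], rule der_hyp1)
    have "derives ?G (Imp (Neg \<psi>) \<theta>)" by (rule iffD1'[OF A9], rule conjD1[OF c])
    then have "derives ?G \<theta>" using conjD2[OF c] by (rule derives.mp)
    then show "derives ?G (Neg (Neg \<theta>))" by (rule iffD2'[OF A9])
  qed
  then have "derives \<Xi> (Imp (Neg (Dia (Disj ?X \<psi>))) (Neg (Dia (Neg \<theta>))))" by (rule derives.RDiaN)
  then show ?case using 3 sat_closed[OF sat] sat_mp[OF sat] by blast
qed

lemma canon_simps:
  "W canonical = {s. is_segment s}"
  "le canonical s t = (hd_set s \<subseteq> hd_set t)"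
  "RBp canonical s t = (hd_set t \<in> PhiBp s)"
  "RBm canonical s t = (hd_set t \<in> PhiBm s)"
  "RDp canonical s t = (hd_set t \<in> PhiDp s)"
  "RDm canonical s t = (hd_set t \<in> PhiDm s)"
  "vp canonical p = {s. is_segment s \<and> Atom p \<in> hd_set s}"
  "vm canonical p = {s. is_segment s \<and> Neg (Atom p) \<in> hd_set s}"
  by (simp_all add: canonical_def)

definition mkseg :: "'a fm set \<Rightarrow> 'a fm set set \<Rightarrow> 'a fm set set \<Rightarrow> 'a fm set set \<Rightarrow> 'a fm set set \<Rightarrow> 'a segment" where
  "mkseg G a b c d = \<lparr>hd_set = G, PhiBp = a, PhiBm = b, PhiDp = c, PhiDm = d\<rparr>"

lemma mkseg_simps[simp]:
  "hd_set (mkseg G a b c d) = G" "PhiBp (mkseg G a b c d) = a" "PhiBm (mkseg G a b c d) = b"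
  "PhiDp (mkseg G a b c d) = c" "PhiDm (mkseg G a b c d) = d"
  by (simp_all add: mkseg_def)

lemma triv_seg: "saturated G \<Longrightarrow> is_segment (mkseg G {} {UNIV} {UNIV} {})"
  unfolding is_segment_def by (simp add: sat_UNIV)

lemma seg_sat: "is_segment s \<Longrightarrow> saturated (hd_set s)"
  unfolding is_segment_def by blast


lemma seg_parts1:
  assumes "is_segment w"
  shows "\<forall>\<phi>. Box \<phi> \<in> hd_set w \<longrightarrow> (\<forall>\<Delta>\<in>PhiBp w. \<phi> \<in> \<Delta>)"
  using assms unfolding is_segment_def by (elim conjE) assumption

lemma seg_parts2:
  assumes "is_segment w"
  shows "\<forall>\<phi>. Neg (Box \<phi>) \<in> hd_set w \<longrightarrow> (\<exists>\<Delta>\<in>PhiBm w. Neg \<phi> \<in> \<Delta>)"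
  using assms unfolding is_segment_def by (elim conjE) assumption

lemma seg_parts3:
  assumes "is_segment w"
  shows "\<forall>\<phi>. Dia \<phi> \<in> hd_set w \<longrightarrow> (\<exists>\<Delta>\<in>PhiDp w. \<phi> \<in> \<Delta>)"
  using assms unfolding is_segment_def by (elim conjE) assumption

lemma seg_parts4:
  assumes "is_segment w"
  shows "\<forall>\<phi>. Neg (Dia \<phi>) \<in> hd_set w \<longrightarrow> (\<forall>\<Delta>\<in>PhiDm w. Neg \<phi> \<in> \<Delta>)"
  using assms unfolding is_segment_def by (elim conjE) assumption

lemma seg_parts5:
  assumes "is_segment w"
  shows "\<forall>\<Delta>\<in>PhiBm w. saturated \<Delta>"
  using assms unfolding is_segment_def by (elim conjE) assumption

lemma seg_parts6:
  assumes "is_segment w"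
  shows "\<forall>\<Delta>\<in>PhiDp w. saturated \<Delta>"
  using assms unfolding is_segment_def by (elim conjE) assumption

lemma seg_box: "is_segment w \<Longrightarrow> Box \<phi> \<in> hd_set w \<Longrightarrow> D \<in> PhiBp w \<Longrightarrow> \<phi> \<in> D"
  using seg_parts1 by blast
lemma seg_negdia: "is_segment w \<Longrightarrow> Neg (Dia \<phi>) \<in> hd_set w \<Longrightarrow> D \<in> PhiDm w \<Longrightarrow> Neg \<phi> \<in> D"
  using seg_parts4 by blast
lemma seg_negbox: "is_segment w \<Longrightarrow> Neg (Box \<phi>) \<in> hd_set w \<Longrightarrow> \<exists>D\<in>PhiBm w. saturated D \<and> Neg \<phi> \<in> D"
  using seg_parts2 seg_parts5 by blast
lemma seg_dia: "is_segment w \<Longrightarrow> Dia \<phi> \<in> hd_set w \<Longrightarrow> \<exists>D\<in>PhiDp w. saturated D \<and> \<phi> \<in> D"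
  using seg_parts3 seg_parts6 by blast

lemma ex_triv: "saturated D \<Longrightarrow> D \<in> X \<Longrightarrow> P D \<Longrightarrow> \<exists>u. is_segment u \<and> hd_set u \<in> X \<and> P (hd_set u)"
  by (rule exI[of _ "mkseg D {} {UNIV} {UNIV} {}"]) (simp add: triv_seg)

theorem lemma2:
  fixes \<phi> :: "('a::countable) fm" and s :: "'a segment"
  assumes "is_segment s"
  shows "(forces canonical True s \<phi> \<longleftrightarrow> \<phi> \<in> hd_set s)
       \<and> (forces canonical False s \<phi> \<longleftrightarrow> Neg \<phi> \<in> hd_set s)"
  using assms
proof (induction \<phi> arbitrary: s)
  case (Atom p)
  then show ?case by (simp add: canon_simps)
next
  case (Neg \<phi>)
  then show ?case using sat_negneg[OF seg_sat[OF Neg.prems]] by simp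
next
  case (Conj \<phi> \<chi>)
  then show ?case using sat_conj[OF seg_sat[OF Conj.prems]] sat_negconj[OF seg_sat[OF Conj.prems]] by simp
next
  case (Disj \<phi> \<chi>)
  then show ?case using sat_disj[OF seg_sat[OF Disj.prems]] sat_negdisj[OF seg_sat[OF Disj.prems]] by simp
next
  case (Imp \<phi> \<chi>)
  have sat: "saturated (hd_set s)" by (rule seg_sat[OF Imp.prems])
  have IH1: "\<And>t. is_segment t \<Longrightarrow> forces canonical True t \<phi> \<longleftrightarrow> \<phi> \<in> hd_set t" using Imp.IH(1) by blast
  have IH2: "\<And>t. is_segment t \<Longrightarrow> forces canonical True t \<chi> \<longleftrightarrow> \<chi> \<in> hd_set t" using Imp.IH(2) by blast
  have neg: "forces canonical False s (Imp \<phi> \<chi>) \<longleftrightarrow> Neg (Imp \<phi> \<chi>) \<in> hd_set s"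
    using Imp sat_negimp[OF sat] by simp
  have "forces canonical True s (Imp \<phi> \<chi>) \<longleftrightarrow>
     (\<forall>w. is_segment w \<longrightarrow> hd_set s \<subseteq> hd_set w \<longrightarrow> \<phi> \<in> hd_set w \<longrightarrow> \<chi> \<in> hd_set w)"
    by (auto simp add: canon_simps IH1 IH2)
  also have "\<dots> \<longleftrightarrow> Imp \<phi> \<chi> \<in> hd_set s"
  proof
    assume H: "\<forall>w. is_segment w \<longrightarrow> hd_set s \<subseteq> hd_set w \<longrightarrow> \<phi> \<in> hd_set w \<longrightarrow> \<chi> \<in> hd_set w"
    show "Imp \<phi> \<chi> \<in> hd_set s"
    proof (rule ccontr)
      assume ni: "Imp \<phi> \<chi> \<notin> hd_set s"
      have "\<not> derives (insert \<phi> (hd_set s)) \<chi>"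
      proof
        assume "derives (insert \<phi> (hd_set s)) \<chi>"
        then have "derives (hd_set s) (Imp \<phi> \<chi>)" by (rule ded)
        then show False using ni sat_closed[OF sat] by blast
      qed
      then obtain G where G: "insert \<phi> (hd_set s) \<subseteq> G" "saturated G" "\<chi> \<notin> G"
        using lindenbaum by blast
      have "is_segment (mkseg G {} {UNIV} {UNIV} {})" by (rule triv_seg[OF G(2)])
      then show False using H G by fastforce
    qed
  next
    assume "Imp \<phi> \<chi> \<in> hd_set s"
    then show "\<forall>w. is_segment w \<longrightarrow> hd_set s \<subseteq> hd_set w \<longrightarrow> \<phi> \<in> hd_set w \<longrightarrow> \<chi> \<in> hd_set w"
      using sat_mp seg_sat by blast
  qed
  finally show ?case using neg by blast
next
  case (Box \<phi>)
  have sat: "saturated (hd_set s)" by (rule seg_sat[OF Box.prems])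
  have IH1: "\<And>t. is_segment t \<Longrightarrow> forces canonical True t \<phi> \<longleftrightarrow> \<phi> \<in> hd_set t" using Box.IH by blast
  have IH2: "\<And>t. is_segment t \<Longrightarrow> forces canonical False t \<phi> \<longleftrightarrow> Neg \<phi> \<in> hd_set t" using Box.IH by blast
  have "forces canonical True s (Box \<phi>) \<longleftrightarrow>
     (\<forall>w. is_segment w \<longrightarrow> hd_set s \<subseteq> hd_set w \<longrightarrow> (\<forall>u. is_segment u \<longrightarrow> hd_set u \<in> PhiBp w \<longrightarrow> \<phi> \<in> hd_set u))"
    by (auto simp add: canon_simps IH1)
  also have "\<dots> \<longleftrightarrow> Box \<phi> \<in> hd_set s"
  proof
    assume H: "\<forall>w. is_segment w \<longrightarrow> hd_set s \<subseteq> hd_set w \<longrightarrow> (\<forall>u. is_segment u \<longrightarrow> hd_set u \<in> PhiBp w \<longrightarrow> \<phi> \<in> hd_set u)"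
    show "Box \<phi> \<in> hd_set s"
    proof (rule ccontr)
      assume ni: "Box \<phi> \<notin> hd_set s"
      have "\<not> derives {\<psi>. Box \<psi> \<in> hd_set s} \<phi>"
      proof
        assume "derives {\<psi>. Box \<psi> \<in> hd_set s} \<phi>"
        then obtain F where "finite F" "F \<subseteq> {\<psi>. Box \<psi> \<in> hd_set s}" "derives F \<phi>" using compact by blast
        then show False using box_lemma[OF sat] ni by blast
      qed
      then obtain D where D: "{\<psi>. Box \<psi> \<in> hd_set s} \<subseteq> D" "saturated D" "\<phi> \<notin> D"
        using lindenbaum by blast
      have w: "is_segment (mkseg (hd_set s) {D} {UNIV} {UNIV} {})"
        using Box.prems D unfolding is_segment_def by (auto simp add: sat_UNIV)
      have u: "is_segment (mkseg D {} {UNIV} {UNIV} {})" by (rule triv_seg[OF D(2)])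
      show False using H[rule_format, OF w _ u] D by simp
    qed
  next
    assume "Box \<phi> \<in> hd_set s"
    then show "\<forall>w. is_segment w \<longrightarrow> hd_set s \<subseteq> hd_set w \<longrightarrow> (\<forall>u. is_segment u \<longrightarrow> hd_set u \<in> PhiBp w \<longrightarrow> \<phi> \<in> hd_set u)"
      using seg_box by (metis subsetD)
  qed
  finally have pos: "forces canonical True s (Box \<phi>) \<longleftrightarrow> Box \<phi> \<in> hd_set s" .
  have "forces canonical False s (Box \<phi>) \<longleftrightarrow>
     (\<forall>w. is_segment w \<longrightarrow> hd_set s \<subseteq> hd_set w \<longrightarrow> (\<exists>u. is_segment u \<and> hd_set u \<in> PhiBm w \<and> Neg \<phi> \<in> hd_set u))"
    by (auto simp add: canon_simps IH2)
  also have "\<dots> \<longleftrightarrow> Neg (Box \<phi>) \<in> hd_set s"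
  proof
    assume H: "\<forall>w. is_segment w \<longrightarrow> hd_set s \<subseteq> hd_set w \<longrightarrow> (\<exists>u. is_segment u \<and> hd_set u \<in> PhiBm w \<and> Neg \<phi> \<in> hd_set u)"
    show "Neg (Box \<phi>) \<in> hd_set s"
    proof (rule ccontr)
      assume ni: "Neg (Box \<phi>) \<notin> hd_set s"
      have ex: "\<exists>D\<in>{D. saturated D \<and> Neg \<phi> \<notin> D}. Neg \<psi> \<in> D" if "Neg (Box \<psi>) \<in> hd_set s" for \<psi>
      proof -
        have "\<not> derives {Neg \<psi>} (Neg \<phi>)"
        proof
          assume "derives {Neg \<psi>} (Neg \<phi>)"
          then have "derives {} (Imp (Neg \<psi>) (Neg \<phi>))" by (rule ded)
          then have "derives (hd_set s) (Imp (Neg (Box \<psi>)) (Neg (Box \<phi>)))" by (rule derives.RBoxN)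
          then show False using ni that sat_closed[OF sat] sat_mp[OF sat] by blast
        qed
        then show ?thesis using lindenbaum by fastforce
      qed
      have w: "is_segment (mkseg (hd_set s) {} {D. saturated D \<and> Neg \<phi> \<notin> D} {UNIV} {})"
        using Box.prems ex unfolding is_segment_def by (auto simp add: sat_UNIV)
      show False using H[rule_format, OF w] by auto
    qed
  next
    assume "Neg (Box \<phi>) \<in> hd_set s"
    then show "\<forall>w. is_segment w \<longrightarrow> hd_set s \<subseteq> hd_set w \<longrightarrow> (\<exists>u. is_segment u \<and> hd_set u \<in> PhiBm w \<and> Neg \<phi> \<in> hd_set u)"
    proof (intro allI impI)
      fix w assume "is_segment w" "hd_set s \<subseteq> hd_set w"
      then obtain D where "D \<in> PhiBm w" "saturated D" "Neg \<phi> \<in> D"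
        using seg_negbox \<open>Neg (Box \<phi>) \<in> hd_set s\<close> by blast
      then show "\<exists>u. is_segment u \<and> hd_set u \<in> PhiBm w \<and> Neg \<phi> \<in> hd_set u"
        by (intro ex_triv[where P="\<lambda>D. Neg \<phi> \<in> D"])
    qed
  qed
  finally show ?case using pos by blast
next
  case (Dia \<phi>)
  have sat: "saturated (hd_set s)" by (rule seg_sat[OF Dia.prems])
  have IH1: "\<And>t. is_segment t \<Longrightarrow> forces canonical True t \<phi> \<longleftrightarrow> \<phi> \<in> hd_set t" using Dia.IH by blast
  have IH2: "\<And>t. is_segment t \<Longrightarrow> forces canonical False t \<phi> \<longleftrightarrow> Neg \<phi> \<in> hd_set t" using Dia.IH by blast
  have "forces canonical False s (Dia \<phi>) \<longleftrightarrow>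
     (\<forall>w. is_segment w \<longrightarrow> hd_set s \<subseteq> hd_set w \<longrightarrow> (\<forall>u. is_segment u \<longrightarrow> hd_set u \<in> PhiDm w \<longrightarrow> Neg \<phi> \<in> hd_set u))"
    by (auto simp add: canon_simps IH2)
  also have "\<dots> \<longleftrightarrow> Neg (Dia \<phi>) \<in> hd_set s"
  proof
    assume H: "\<forall>w. is_segment w \<longrightarrow> hd_set s \<subseteq> hd_set w \<longrightarrow> (\<forall>u. is_segment u \<longrightarrow> hd_set u \<in> PhiDm w \<longrightarrow> Neg \<phi> \<in> hd_set u)"
    show "Neg (Dia \<phi>) \<in> hd_set s"
    proof (rule ccontr)
      assume ni: "Neg (Dia \<phi>) \<notin> hd_set s"
      have "\<not> derives {Neg \<psi> | \<psi>. Neg (Dia \<psi>) \<in> hd_set s} (Neg \<phi>)"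
      proof
        assume "derives {Neg \<psi> | \<psi>. Neg (Dia \<psi>) \<in> hd_set s} (Neg \<phi>)"
        then obtain F where "finite F" "F \<subseteq> {Neg \<psi> | \<psi>. Neg (Dia \<psi>) \<in> hd_set s}" "derives F (Neg \<phi>)" using compact by blast
        then have 1: "Neg (Dia (Neg (Neg \<phi>))) \<in> hd_set s" using dia_lemma[OF sat] by blast
        have "derives {} (Imp (Neg (Neg (Neg \<phi>))) (Neg \<phi>))"
          by (rule ded, rule iffD1'[OF A9], rule der_hyp1)
        then have "derives (hd_set s) (Imp (Neg (Dia (Neg (Neg \<phi>)))) (Neg (Dia \<phi>)))" by (rule derives.RDiaN)
        then show False using 1 ni sat_closed[OF sat] sat_mp[OF sat] by blast
      qed
      then obtain D where D: "{Neg \<psi> | \<psi>. Neg (Dia \<psi>) \<in> hd_set s} \<subseteq> D" "saturated D" "Neg \<phi> \<notin> D"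
        using lindenbaum by blast
      have w: "is_segment (mkseg (hd_set s) {} {UNIV} {UNIV} {D})"
        using Dia.prems D unfolding is_segment_def by (auto simp add: sat_UNIV)
      have u: "is_segment (mkseg D {} {UNIV} {UNIV} {})" by (rule triv_seg[OF D(2)])
      show False using H[rule_format, OF w _ u] D by simp
    qed
  next
    assume "Neg (Dia \<phi>) \<in> hd_set s"
    then show "\<forall>w. is_segment w \<longrightarrow> hd_set s \<subseteq> hd_set w \<longrightarrow> (\<forall>u. is_segment u \<longrightarrow> hd_set u \<in> PhiDm w \<longrightarrow> Neg \<phi> \<in> hd_set u)"
      using seg_negdia by (metis subsetD)
  qed
  finally have neg: "forces canonical False s (Dia \<phi>) \<longleftrightarrow> Neg (Dia \<phi>) \<in> hd_set s" .
  have "forces canonical True s (Dia \<phi>) \<longleftrightarrow>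
     (\<forall>w. is_segment w \<longrightarrow> hd_set s \<subseteq> hd_set w \<longrightarrow> (\<exists>u. is_segment u \<and> hd_set u \<in> PhiDp w \<and> \<phi> \<in> hd_set u))"
    by (auto simp add: canon_simps IH1)
  also have "\<dots> \<longleftrightarrow> Dia \<phi> \<in> hd_set s"
  proof
    assume H: "\<forall>w. is_segment w \<longrightarrow> hd_set s \<subseteq> hd_set w \<longrightarrow> (\<exists>u. is_segment u \<and> hd_set u \<in> PhiDp w \<and> \<phi> \<in> hd_set u)"
    show "Dia \<phi> \<in> hd_set s"
    proof (rule ccontr)
      assume ni: "Dia \<phi> \<notin> hd_set s"
      have ex: "\<exists>D\<in>{D. saturated D \<and> \<phi> \<notin> D}. \<psi> \<in> D" if "Dia \<psi> \<in> hd_set s" for \<psi>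
      proof -
        have "\<not> derives {\<psi>} \<phi>"
        proof
          assume "derives {\<psi>} \<phi>"
          then have "derives {} (Imp \<psi> \<phi>)" by (rule ded)
          then have "derives (hd_set s) (Imp (Dia \<psi>) (Dia \<phi>))" by (rule derives.RDiaP)
          then show False using ni that sat_closed[OF sat] sat_mp[OF sat] by blast
        qed
        then show ?thesis using lindenbaum by fastforce
      qed
      have w: "is_segment (mkseg (hd_set s) {} {UNIV} {D. saturated D \<and> \<phi> \<notin> D} {})"
        using Dia.prems ex unfolding is_segment_def by (auto simp add: sat_UNIV)
      show False using H[rule_format, OF w] by auto
    qed
  next
    assume "Dia \<phi> \<in> hd_set s"
    then show "\<forall>w. is_segment w \<longrightarrow> hd_set s \<subseteq> hd_set w \<longrightarrow> (\<exists>u. is_segment u \<and> hd_set u \<in> PhiDp w \<and> \<phi> \<in> hd_set u)"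
    proof (intro allI impI)
      fix w assume "is_segment w" "hd_set s \<subseteq> hd_set w"
      then obtain D where "D \<in> PhiDp w" "saturated D" "\<phi> \<in> D"
        using seg_dia \<open>Dia \<phi> \<in> hd_set s\<close> by blast
      then show "\<exists>u. is_segment u \<and> hd_set u \<in> PhiDp w \<and> \<phi> \<in> hd_set u"
        by (intro ex_triv[where P="\<lambda>D. \<phi> \<in> D"])
    qed
  qed
  finally show ?case using neg by blast
qed

end
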